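(* Let $n>3$ be an integer and $[n]=\{0,1,\dots,n-1\}$. Let $B_0,B_1,\dots,B_m$ ($m\ge 1$) be a sequence of $3$-element subsets of $[n]$ such that $|B_t\setminus B_{t+1}|=1$ for every $0\le t<m$. For $0\le t<m$ let $e_t$ denote the unique element of $B_t\setminus B_{t+1}$ (the partition evicted after state $t$), and for $1\le t\le m$ let $\ell_t$ denote the unique element of $B_t\setminus B_{t-1}$ (the partition just loaded into state $t$). Suppose that: (1) for every $1\le t<m$, $\ell_t\neq e_t$; and (2) for every pair $a\neq b$ in $[n]$, the set $\{t\in\{0,\dots,m\} : \{a,b\}\subseteq B_t\}$ is a set of consecutive integers (possibly empty). Then the sequence is a Prefetching Supported Order: for every $0\le t<m$ there exists an edge bucket $(a,b)\in[n]^2$ that is pending at state $t$ and satisfies $e_t\notin\{a,b\}$.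
   Context: Node embeddings are split into $n$ partitions indexed by $[n]$; an edge bucket is an ordered pair $(a,b)\in[n]^2$. The GPU buffer holds exactly $3$ partitions at a time; the buffer states are the sets $B_0,\dots,B_m$, and consecutive states differ by swapping out exactly one partition and swapping in exactly one other. An edge bucket $(a,b)$ is processed at the first buffer state containing both $a$ and $b$; accordingly, $(a,b)$ is called pending at state $t$ if $\{a,b\}\subseteq B_t$ and there is no $s<t$ with $\{a,b\}\subseteq B_s$. A sequence of buffer states is a Prefetching Supported Order if for every $0\le t<m$ there is at least one edge bucket pending at state $t$ that does not involve the partition $e_t$ scheduled for eviction (so that this bucket can be computed while $e_t$ is swapped out and the next partition is loaded). *)

theory Defs
  imports Main
begin

text \<open>Buffer states are given as a function B :: nat \<Rightarrow> nat set, of which only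
  B 0, ..., B m are relevant. Partitions are [n] = {0..<n}.\<close>

definition evicted :: "(nat \<Rightarrow> nat set) \<Rightarrow> nat \<Rightarrow> nat" where
  "evicted B t = the_elem (B t - B (Suc t))"

definition loaded :: "(nat \<Rightarrow> nat set) \<Rightarrow> nat \<Rightarrow> nat" where
  "loaded B t = the_elem (B t - B (t - 1))"

definition pending :: "(nat \<Rightarrow> nat set) \<Rightarrow> nat \<Rightarrow> nat \<Rightarrow> nat \<Rightarrow> bool" where
  "pending B t a b \<longleftrightarrow> {a, b} \<subseteq> B t \<and> \<not> (\<exists>s<t. {a, b} \<subseteq> B s)"

definition prefetching_supported_order ::
    "nat \<Rightarrow> (nat \<Rightarrow> nat set) \<Rightarrow> nat \<Rightarrow> bool" where
  "prefetching_supported_order n B m \<longleftrightarrow>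
     (\<forall>t<m. \<exists>a b. a < n \<and> b < n \<and> pending B t a b \<and> evicted B t \<notin> {a, b})"

end

theory Submission
  imports Defs
begin

theorem theorem1:
  fixes n m :: nat and B :: "nat \<Rightarrow> nat set"
  assumes "n > 3" and "m \<ge> 1"
    and "\<forall>t\<le>m. B t \<subseteq> {..<n} \<and> card (B t) = 3"
    and "\<forall>t<m. card (B t - B (Suc t)) = 1"
    and "\<forall>t. 1 \<le> t \<and> t < m \<longrightarrow> loaded B t \<noteq> evicted B t"
    and "\<forall>a<n. \<forall>b<n. a \<noteq> b \<longrightarrow>
           (\<forall>i j k. i \<le> j \<and> j \<le> k \<and> k \<le> m \<and> {a, b} \<subseteq> B i \<and> {a, b} \<subseteq> B k
              \<longrightarrow> {a, b} \<subseteq> B j)"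
  shows "prefetching_supported_order n B m"
  unfolding prefetching_supported_order_def
proof (intro allI impI)
  fix t assume tm: "t < m"
  have Bt: "B t \<subseteq> {..<n}" "card (B t) = 3" using assms(3) tm by auto
  have finBt: "finite (B t)" using Bt(2) by (metis card.infinite zero_neq_numeral)
  obtain e where e: "B t - B (Suc t) = {e}" using assms(4) tm card_1_singletonE by blast
  have ev: "evicted B t = e" unfolding evicted_def e by simp
  have eB: "e \<in> B t" using e by blast
  show "\<exists>a b. a < n \<and> b < n \<and> pending B t a b \<and> evicted B t \<notin> {a, b}"
  proof (cases t)
    case 0
    have "card (B t - {e}) = card (B t) - 1" using eB finBt by (simp add: card_Diff_singleton)
    then have "card (B t - {e}) = 2" using Bt(2) by simp
    then have "B t - {e} \<noteq> {}" by force
    then obtain a where a: "a \<in> B t - {e}" by blast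
    have "pending B t a a" unfolding pending_def using a 0 by auto
    then show ?thesis using a Bt(1) ev by auto
  next
    case (Suc p)
    have Bp: "B p \<subseteq> {..<n}" "card (B p) = 3" using assms(3) tm Suc by auto
    have finBp: "finite (B p)" using Bp(2) by (metis card.infinite zero_neq_numeral)
    have c1: "card (B p - B t) = 1" using assms(4) tm Suc by auto
    have c2: "card (B p - B t) = card (B p) - card (B p \<inter> B t)"
      by (rule card_Diff_subset_Int) (simp add: finBp)
    have c3: "card (B t - B p) = card (B t) - card (B t \<inter> B p)"
      by (rule card_Diff_subset_Int) (simp add: finBt)
    have "B t \<inter> B p = B p \<inter> B t" by blast
    then have "card (B t - B p) = 1" using c1 c2 c3 Bt(2) Bp(2) by simp
    then obtain l where l: "B t - B p = {l}" using card_1_singletonE by blast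
    have ld: "loaded B t = l" unfolding loaded_def using l Suc by simp
    have le: "l \<noteq> e" using assms(5) tm Suc ld ev by auto
    have lB: "l \<in> B t" "l \<notin> B p" using l by auto
    have "card (B t - {l, e}) = card (B t) - card {l, e}" using eB lB finBt by (simp add: card_Diff_subset)
    then have "card (B t - {l, e}) = 1" using Bt(2) le by simp
    then obtain y where "B t - {l, e} = {y}" by (rule card_1_singletonE)
    then have y: "y \<in> B t" "y \<noteq> l" "y \<noteq> e" by blast+
    have ln: "l < n" "y < n" using Bt(1) lB y by auto
    have "pending B t l y" unfolding pending_def
    proof (intro conjI notI)
      show "{l, y} \<subseteq> B t" using lB y by auto
      assume "\<exists>s<t. {l, y} \<subseteq> B s"
      then obtain s where s: "s < t" "{l, y} \<subseteq> B s" by blast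
      have "l \<noteq> y" using y(2) by simp
      have o: "s \<le> p" "p \<le> t" "t \<le> m" using s(1) Suc tm by arith+
      have lyt: "{l, y} \<subseteq> B t" using lB y by auto
      have "{l, y} \<subseteq> B p"
        using assms(6)[rule_format, of l y s p t] ln \<open>l \<noteq> y\<close> o s(2) lyt by simp
      then show False using lB by auto
    qed
    then show ?thesis using ln ev le y by auto
  qed
qed

end
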